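(* The family $\mathfrak{F}^*=\{\tilde{\omega},\tilde{\omega^*}\}\cup\{\tilde{L}_n:n\geq 2\}$ is $\mathbf{PL}$-learnable.
   Context: Partial orders are structures in the language $\{\leq\}$. $\omega$ and $\omega^*$ are the linear orders of the natural numbers and of the negative integers; $L_n$ is the finite linear order with $n$ elements. For a partial order $L$, $\tilde{L}$ is $L$ together with infinitely many new elements that are pairwise incomparable and incomparable to the elements of $L$ (presented with domain $\mathbb{N}$). All structures have domain $\mathbb{N}$ and are identified with their atomic diagrams. For a family $\mathfrak{K}$ (countable set of pairwise nonisomorphic structures), $\mathcal{S}\restriction_s$ is the finite substructure of $\mathcal{S}$ on $\{0,\dots,s\}$ and $\mathrm{LD}(\mathfrak{K})$ is the set of structures with domain $\mathbb{N}$ isomorphic to a member of $\mathfrak{K}$. A learner is an arbitrary function from $\{\mathcal{S}\restriction_s:\mathcal{S}\in\mathrm{LD}(\mathfrak{K})\}$ to $\{\ulcorner\mathcal{A}\urcorner:\mathcal{A}\in\mathfrak{K}\}\cup\{?\}$. $\mathfrak{K}$ is $\mathbf{PL}$-learnable if some learner $\mathbf{M}$ satisfies: for every $\mathcal{S}\in\mathrm{LD}(\mathfrak{K})$ and $\mathcal{A}\in\mathfrak{K}$, $\{n:\mathbf{M}(\mathcal{S}\restriction_n)=\ulcorner\mathcal{A}\urcorner\}$ is infinite iff $\mathcal{A}\cong\mathcal{S}$. *)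

theory Defs
  imports Main
begin

text \<open>A structure in the language {\<le>} with domain \<nat>, given by its (atomic diagram of the)
  binary relation.\<close>
type_synonym struct = "nat \<Rightarrow> nat \<Rightarrow> bool"

definition iso :: "struct \<Rightarrow> struct \<Rightarrow> bool" where
  "iso S T \<longleftrightarrow> (\<exists>f. bij f \<and> (\<forall>x y. S x y \<longleftrightarrow> T (f x) (f y)))"

text \<open>The finite substructure S restricted to {0,...,s}: its size parameter together with
  its atomic diagram (the pairs of related elements among 0..s).\<close>
definition restr :: "struct \<Rightarrow> nat \<Rightarrow> nat \<times> (nat \<times> nat) set" where
  "restr S s = (s, {(a, b). a \<le> s \<and> b \<le> s \<and> S a b})"

text \<open>A family of structures, indexed by codes of type 'i (the codes are the indices).
  LD K: structures with domain \<nat> isomorphic to some member of K.\<close>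
definition LD :: "('i \<Rightarrow> struct) \<Rightarrow> struct set" where
  "LD K = {S. \<exists>i. iso S (K i)}"

text \<open>PL-learnability. A learner maps finite substructures to a code or to ? (None).\<close>
definition PL_learnable :: "('i \<Rightarrow> struct) \<Rightarrow> bool" where
  "PL_learnable K \<longleftrightarrow>
     (\<exists>M :: nat \<times> (nat \<times> nat) set \<Rightarrow> 'i option.
        \<forall>S \<in> LD K. \<forall>i. infinite {n. M (restr S n) = Some i} \<longleftrightarrow> iso S (K i))"

text \<open>Presentations with domain \<nat>. omega~: the even numbers form a copy of \<omega>,
  the odd numbers are the extra pairwise incomparable elements.\<close>
definition omega_t :: struct where
  "omega_t x y \<longleftrightarrow> x = y \<or> (even x \<and> even y \<and> x \<le> y)"

text \<open>omega*~: the even numbers form a copy of \<omega>* (reversed order).\<close>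
definition omegastar_t :: struct where
  "omegastar_t x y \<longleftrightarrow> x = y \<or> (even x \<and> even y \<and> y \<le> x)"

text \<open>L_n~: elements 0..n-1 form a chain of length n, all others are isolated.\<close>
definition Ln_t :: "nat \<Rightarrow> struct" where
  "Ln_t n x y \<longleftrightarrow> x = y \<or> (x < n \<and> y < n \<and> x \<le> y)"

fun Fstar :: "nat \<Rightarrow> struct" where
  "Fstar 0 = omega_t"
| "Fstar (Suc 0) = omegastar_t"
| "Fstar (Suc (Suc k)) = Ln_t (Suc (Suc k))"

end

theory Submission
  imports Defs
begin

definition Nn :: "struct \<Rightarrow> nat set \<Rightarrow> nat set" where
  "Nn R A = {a\<in>A. \<exists>b\<in>A. b \<noteq> a \<and> (R a b \<or> R b a)}"
definition lo :: "struct \<Rightarrow> nat set \<Rightarrow> nat set" where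
  "lo R N = {a\<in>N. \<forall>b\<in>N. R a b}"
definition hi :: "struct \<Rightarrow> nat set \<Rightarrow> nat set" where
  "hi R N = {a\<in>N. \<forall>b\<in>N. R b a}"
definition dec :: "struct \<Rightarrow> nat set \<Rightarrow> nat set \<Rightarrow> nat option" where
  "dec R A A' = (if lo R (Nn R A) \<noteq> lo R (Nn R A') then Some 1
     else if hi R (Nn R A) \<noteq> hi R (Nn R A') then Some 0
     else if 2 \<le> card (Nn R A) then Some (card (Nn R A)) else None)"
definition learner :: "nat \<times> (nat \<times> nat) set \<Rightarrow> nat option" where
  "learner p = dec (\<lambda>a b. (a,b) \<in> snd p) {..fst p} {..<fst p}"

lemma Nn_sub: "Nn R A \<subseteq> A" unfolding Nn_def by auto

lemma Nn_cong: "(\<And>a b. a \<in> A \<Longrightarrow> b \<in> A \<Longrightarrow> R a b = R' a b) \<Longrightarrow> Nn R A = Nn R' A"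
  unfolding Nn_def by blast
lemma lo_cong: "(\<And>a b. a \<in> N \<Longrightarrow> b \<in> N \<Longrightarrow> R a b = R' a b) \<Longrightarrow> lo R N = lo R' N"
  unfolding lo_def by blast
lemma hi_cong: "(\<And>a b. a \<in> N \<Longrightarrow> b \<in> N \<Longrightarrow> R a b = R' a b) \<Longrightarrow> hi R N = hi R' N"
  unfolding hi_def by blast

lemma dec_cong:
  assumes "A' \<subseteq> A" "\<And>a b. a \<in> A \<Longrightarrow> b \<in> A \<Longrightarrow> R a b = R' a b"
  shows "dec R A A' = dec R' A A'"
proof -
  have 1: "Nn R A = Nn R' A" by (rule Nn_cong) (use assms in auto)
  have 2: "Nn R A' = Nn R' A'" by (rule Nn_cong) (use assms in auto)
  have s1: "Nn R' A \<subseteq> A" "Nn R' A' \<subseteq> A" using Nn_sub assms(1) by blast+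
  have "lo R (Nn R A) = lo R' (Nn R' A)" "lo R (Nn R A') = lo R' (Nn R' A')"
       "hi R (Nn R A) = hi R' (Nn R' A)" "hi R (Nn R A') = hi R' (Nn R' A')"
    unfolding 1 2 by (rule lo_cong hi_cong, use assms s1 in blast)+
  then show ?thesis unfolding dec_def 1 by simp
qed

lemma learner_restr: "learner (restr S s) = dec S {..s} {..<s}"
  unfolding learner_def restr_def by (simp, rule dec_cong) auto

lemma Nn_img: assumes "inj f"
  shows "f ` Nn (\<lambda>x y. T (f x) (f y)) A = Nn T (f ` A)"
proof
  show "f ` Nn (\<lambda>x y. T (f x) (f y)) A \<subseteq> Nn T (f ` A)"
    unfolding Nn_def using assms by (auto simp: inj_eq)
  show "Nn T (f ` A) \<subseteq> f ` Nn (\<lambda>x y. T (f x) (f y)) A"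
  proof
    fix y assume "y \<in> Nn T (f ` A)"
    then obtain a b where "y = f a" "a \<in> A" "b \<in> A" "f b \<noteq> f a" "T (f a) (f b) \<or> T (f b) (f a)"
      unfolding Nn_def by blast
    then have "a \<in> Nn (\<lambda>x y. T (f x) (f y)) A" unfolding Nn_def by auto
    then show "y \<in> f ` Nn (\<lambda>x y. T (f x) (f y)) A" using \<open>y = f a\<close> by blast
  qed
qed

lemma lo_img: "f ` lo (\<lambda>x y. T (f x) (f y)) N = lo T (f ` N)"
  unfolding lo_def by auto

lemma hi_img: "f ` hi (\<lambda>x y. T (f x) (f y)) N = hi T (f ` N)"
  unfolding hi_def by auto

lemma dec_img: assumes "inj f"
  shows "dec (\<lambda>x y. T (f x) (f y)) A A' = dec T (f ` A) (f ` A')"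
proof -
  let ?S = "\<lambda>x y. T (f x) (f y)"
  have e: "\<And>X Y. (X = Y) = (f ` X = f ` Y)" using assms(1) by (simp add: inj_image_eq_iff)
  have n: "\<And>A. f ` Nn ?S A = Nn T (f ` A)" using Nn_img[OF assms] .
  have c: "card (Nn ?S A) = card (Nn T (f ` A))"
    using n[of A] card_image[of f] assms(1) by (metis inj_on_subset subset_UNIV)
  have l: "(lo ?S (Nn ?S A) = lo ?S (Nn ?S A')) = (lo T (Nn T (f ` A)) = lo T (Nn T (f ` A')))"
    using e[of "lo ?S (Nn ?S A)" "lo ?S (Nn ?S A')"] by (simp only: lo_img n)
  have h: "(hi ?S (Nn ?S A) = hi ?S (Nn ?S A')) = (hi T (Nn T (f ` A)) = hi T (Nn T (f ` A')))"
    using e[of "hi ?S (Nn ?S A)" "hi ?S (Nn ?S A')"] by (simp only: hi_img n)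
  show ?thesis unfolding dec_def c l h ..
qed

lemma dec_Some1: "dec R A A' = Some 1 \<Longrightarrow> lo R (Nn R A) \<noteq> lo R (Nn R A')"
  unfolding dec_def by (auto split: if_splits)
lemma dec_Some0: "dec R A A' = Some 0 \<Longrightarrow> hi R (Nn R A) \<noteq> hi R (Nn R A')"
  unfolding dec_def by (auto split: if_splits)
lemma dec_SomeSS: "dec R A A' = Some (Suc (Suc k)) \<Longrightarrow> card (Nn R A) = Suc (Suc k)"
  unfolding dec_def by (auto split: if_splits)

lemma exhaust: fixes f :: "nat \<Rightarrow> nat" assumes "surj f" "finite X"
  shows "\<exists>s0. \<forall>s\<ge>s0. X \<subseteq> f ` {..<s}"
proof -
  obtain s0 where s0: "\<And>x. x \<in> inv f ` X \<Longrightarrow> x < s0"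
    using finite_nat_set_iff_bounded[of "inv f ` X"] assms(2) by blast
  have "X \<subseteq> f ` {..<s}" if "s \<ge> s0" for s
  proof
    fix x assume "x \<in> X"
    then have "inv f x < s" using s0 that by fastforce
    moreover have "x = f (inv f x)" using assms(1) by (simp add: surj_f_inv_f)
    ultimately show "x \<in> f ` {..<s}" by blast
  qed
  then show ?thesis by blast
qed

lemma change: fixes g :: "nat \<Rightarrow> 'a"
  shows "s \<le> t \<Longrightarrow> g s \<noteq> g t \<Longrightarrow> \<exists>u. s < u \<and> u \<le> t \<and> g u \<noteq> g (u - 1)"
proof (induction t)
  case 0 then show ?case by simp
next
  case (Suc t)
  show ?case
  proof (cases "g (Suc t) = g t")
    case True
    have gs: "g s \<noteq> g t" using Suc.prems(2) True by simp
    then have "s \<noteq> Suc t" using True by metis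
    then have "s \<le> t" using Suc.prems(1) by simp
    then obtain u where "s < u" "u \<le> t" "g u \<noteq> g (u - 1)" using Suc.IH gs by blast
    then show ?thesis by (intro exI[of _ u]) simp
  next
    case False then show ?thesis using Suc.prems by (intro exI[of _ "Suc t"]) (auto simp: le_less)
  qed
qed

lemma lessThan_pred: "0 < (u::nat) \<Longrightarrow> {..<u} = {..u - 1}" using lessThan_Suc_atMost[of "u - 1"] by simp

lemma unb_inf: "(\<And>m. \<exists>n>m. n \<in> S) \<Longrightarrow> infinite (S::nat set)"
  using finite_nat_set_iff_bounded by (meson order.asym)

lemma NnO_sub: "Nn omega_t B \<subseteq> {x\<in>B. even x}" unfolding Nn_def omega_t_def by auto
lemma NnO_in: assumes "even a" "even b" "a \<noteq> b" "a \<in> B" "b \<in> B" shows "a \<in> Nn omega_t B"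
  unfolding Nn_def omega_t_def using assms
  apply simp apply (rule bexI[of _ b]) by auto

lemma loO: assumes "0 \<in> B" "2 \<in> B" shows "lo omega_t (Nn omega_t B) = {0}"
proof -
  have 0: "0 \<in> Nn omega_t B" using NnO_in[of 0 2 B] assms by simp
  have "0 \<in> lo omega_t (Nn omega_t B)" unfolding lo_def using 0 NnO_sub
    by (auto simp: omega_t_def)
  moreover have "a = 0" if "a \<in> lo omega_t (Nn omega_t B)" for a
    using that 0 unfolding lo_def omega_t_def by auto
  ultimately show ?thesis by blast
qed

lemma hiO_change: assumes "finite B" "0 \<in> B" "2 \<in> B" "B \<subseteq> B'" "e \<in> B'" "even e" "\<forall>x\<in>B. x < e"
  shows "hi omega_t (Nn omega_t B) \<noteq> hi omega_t (Nn omega_t B')"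
proof -
  let ?E = "{x\<in>B. even x}"
  define m where "m = Max ?E"
  have fE: "finite ?E" using assms(1) by simp
  have mE: "m \<in> ?E" unfolding m_def using fE assms(2) by (intro Max_in) auto
  have mge: "\<And>b. b \<in> ?E \<Longrightarrow> b \<le> m" unfolding m_def using fE by simp
  have mN: "m \<in> Nn omega_t B"
  proof (cases "m = 0")
    case True then show ?thesis using NnO_in[of m 2 B] assms mE by simp
  next
    case False then show ?thesis using NnO_in[of m 0 B] assms mE by simp
  qed
  have mhi: "m \<in> hi omega_t (Nn omega_t B)" unfolding hi_def
    using mN NnO_sub mge by (auto simp: omega_t_def)
  have me: "m < e" using assms(7) mE by blast
  have e0: "e \<noteq> 0" using assms(2,7) by fastforce
  have eN: "e \<in> Nn omega_t B'" using NnO_in[of e 0 B'] assms e0 by auto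
  have "m \<notin> hi omega_t (Nn omega_t B')" unfolding hi_def using eN me
    by (auto simp: omega_t_def)
  then show ?thesis using mhi by blast
qed

lemma NnS_sub: "Nn omegastar_t B \<subseteq> {x\<in>B. even x}" unfolding Nn_def omegastar_t_def by auto
lemma NnS_in: assumes "even a" "even b" "a \<noteq> b" "a \<in> B" "b \<in> B" shows "a \<in> Nn omegastar_t B"
  unfolding Nn_def omegastar_t_def using assms
  apply simp apply (rule bexI[of _ b]) by auto

lemma hiS: assumes "0 \<in> B" "2 \<in> B" shows "hi omegastar_t (Nn omegastar_t B) = {0}"
proof -
  have 0: "0 \<in> Nn omegastar_t B" using NnS_in[of 0 2 B] assms by simp
  have "0 \<in> hi omegastar_t (Nn omegastar_t B)" unfolding hi_def using 0 NnS_sub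
    by (auto simp: omegastar_t_def)
  moreover have "a = 0" if "a \<in> hi omegastar_t (Nn omegastar_t B)" for a
    using that 0 unfolding hi_def omegastar_t_def by auto
  ultimately show ?thesis by blast
qed

lemma loS_change: assumes "finite B" "0 \<in> B" "2 \<in> B" "B \<subseteq> B'" "e \<in> B'" "even e" "\<forall>x\<in>B. x < e"
  shows "lo omegastar_t (Nn omegastar_t B) \<noteq> lo omegastar_t (Nn omegastar_t B')"
proof -
  let ?E = "{x\<in>B. even x}"
  define m where "m = Max ?E"
  have fE: "finite ?E" using assms(1) by simp
  have mE: "m \<in> ?E" unfolding m_def using fE assms(2) by (intro Max_in) auto
  have mge: "\<And>b. b \<in> ?E \<Longrightarrow> b \<le> m" unfolding m_def using fE by simp
  have mN: "m \<in> Nn omegastar_t B"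
  proof (cases "m = 0")
    case True then show ?thesis using NnS_in[of m 2 B] assms mE by simp
  next
    case False then show ?thesis using NnS_in[of m 0 B] assms mE by simp
  qed
  have mlo: "m \<in> lo omegastar_t (Nn omegastar_t B)" unfolding lo_def
    using mN NnS_sub mge by (auto simp: omegastar_t_def)
  have me: "m < e" using assms(7) mE by blast
  have e0: "e \<noteq> 0" using assms(2,7) by fastforce
  have eN: "e \<in> Nn omegastar_t B'" using NnS_in[of e 0 B'] assms e0 by auto
  have "m \<notin> lo omegastar_t (Nn omegastar_t B')" unfolding lo_def using eN me
    by (auto simp: omegastar_t_def)
  then show ?thesis using mlo by blast
qed

lemma card_big:
  assumes "T = omega_t \<or> T = omegastar_t" "finite B" "(\<lambda>i. 2*i) ` {..Suc (Suc k)} \<subseteq> B"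
  shows "card (Nn T B) \<noteq> Suc (Suc k)"
proof -
  let ?E = "(\<lambda>i::nat. 2*i) ` {..Suc (Suc k)}"
  have 0: "0 \<in> ?E" "2 \<in> ?E" by force+
  have sub: "?E \<subseteq> Nn T B"
  proof
    fix a assume a: "a \<in> ?E"
    then have ea: "even a" by auto
    let ?b = "if a = 0 then 2 else 0::nat"
    have "?b \<in> ?E" using 0 by simp
    then have "?b \<in> B" "even ?b" "a \<noteq> ?b" using assms(3) by auto
    then show "a \<in> Nn T B" using assms(1) NnO_in[of a ?b B] NnS_in[of a ?b B] ea a assms(3) by auto
  qed
  have "card ?E = Suc (Suc (Suc k))" by (subst card_image) (auto simp: inj_on_def)
  moreover have "card ?E \<le> card (Nn T B)"
    using sub by (rule card_mono[rotated]) (use assms(2) Nn_sub finite_subset in blast)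
  ultimately show ?thesis by simp
qed

lemma case_omega: fixes f :: "nat \<Rightarrow> nat" assumes "bij f"
  shows "infinite {s. dec omega_t (f ` {..s}) (f ` {..<s}) = Some 0}"
    and "j \<noteq> 0 \<Longrightarrow> finite {s. dec omega_t (f ` {..s}) (f ` {..<s}) = Some j}"
proof -
  let ?o = "\<lambda>s. dec omega_t (f ` {..s}) (f ` {..<s})"
  have sf: "surj f" using assms bij_is_surj by blast
  obtain s0 where s0: "\<And>s. s \<ge> s0 \<Longrightarrow> {0,2} \<subseteq> f ` {..<s}"
    using exhaust[OF sf, of "{0,2}"] by auto
  have sub: "\<And>s. f ` {..<s} \<subseteq> f ` {..s}" by auto
  have loeq: "lo omega_t (Nn omega_t (f ` {..s})) = lo omega_t (Nn omega_t (f ` {..<s}))" if "s \<ge> s0" for s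
  proof -
    have "0 \<in> f ` {..<s}" "2 \<in> f ` {..<s}" using s0[OF that] by auto
    moreover then have "0 \<in> f ` {..s}" "2 \<in> f ` {..s}" using sub[of s] by auto
    ultimately show ?thesis by (simp add: loO)
  qed
  have f1: "finite {s. ?o s = Some 1}"
  proof (rule finite_subset)
    show "{s. ?o s = Some 1} \<subseteq> {..<s0}"
    proof
      fix s assume "s \<in> {s. ?o s = Some 1}"
      then have "lo omega_t (Nn omega_t (f ` {..s})) \<noteq> lo omega_t (Nn omega_t (f ` {..<s}))"
        using dec_Some1 by simp
      then have "\<not> s0 \<le> s" using loeq by blast
      then show "s \<in> {..<s0}" by simp
    qed
  qed simp
  have fk: "finite {s. ?o s = Some (Suc (Suc k))}" for k
  proof -
    obtain s1 where s1: "\<And>s. s \<ge> s1 \<Longrightarrow> (\<lambda>i. 2*i) ` {..Suc (Suc k)} \<subseteq> f ` {..<s}"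
      using exhaust[OF sf, of "(\<lambda>i. 2*i) ` {..Suc (Suc k)}"] by auto
    have "{s. ?o s = Some (Suc (Suc k))} \<subseteq> {..<s1}"
    proof
      fix s assume "s \<in> {s. ?o s = Some (Suc (Suc k))}"
      then have "card (Nn omega_t (f ` {..s})) = Suc (Suc k)" using dec_SomeSS by auto
      show "s \<in> {..<s1}"
      proof (rule ccontr)
        assume "s \<notin> {..<s1}"
        then have "s1 \<le> s" by simp
        then have "(\<lambda>i. 2*i) ` {..Suc (Suc k)} \<subseteq> f ` {..s}" using s1 sub[of s] by blast
        then have "card (Nn omega_t (f ` {..s})) \<noteq> Suc (Suc k)"
          using card_big[of omega_t "f ` {..s}" k] by simp
        then show False using \<open>card (Nn omega_t (f ` {..s})) = Suc (Suc k)\<close> by simp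
      qed
    qed
    then show ?thesis by (rule finite_subset) simp
  qed
  show "j \<noteq> 0 \<Longrightarrow> finite {s. ?o s = Some j}"
  proof -
    assume "j \<noteq> 0"
    then consider "j = 1" | k where "j = Suc (Suc k)" by (metis One_nat_def not0_implies_Suc)
    then show ?thesis using f1 fk by cases auto
  qed
  show "infinite {s. ?o s = Some 0}"
  proof (rule unb_inf)
    fix m
    define s where "s = max m s0"
    let ?B = "f ` {..s}"
    define e where "e = 2 * (Max ?B + 1)"
    define t where "t = inv f e"
    have ft: "f t = e" unfolding t_def using sf by (simp add: surj_f_inv_f)
    have fB: "finite ?B" by simp
    have ltB: "\<forall>x\<in>?B. x < e"
    proof
      fix x assume "x \<in> ?B"
      then have "x \<le> Max ?B" using fB by (intro Max_ge) auto
      then show "x < e" unfolding e_def by simp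
    qed
    have ts: "s < t"
    proof (rule ccontr)
      assume "\<not> s < t" then have "e \<in> ?B" using ft by auto
      then show False using ltB by blast
    qed
    have 02: "0 \<in> ?B" "2 \<in> ?B" using s0[of s] sub[of s] unfolding s_def by auto
    let ?g = "\<lambda>u. hi omega_t (Nn omega_t (f ` {..u}))"
    have "?g s \<noteq> ?g t"
    proof (rule hiO_change[OF fB 02(1) 02(2) _ _ _ ltB])
      show "f ` {..s} \<subseteq> f ` {..t}" using ts by (intro image_mono) auto
      show "e \<in> f ` {..t}" using ft by blast
      show "even e" unfolding e_def by simp
    qed
    then obtain u where u: "s < u" "u \<le> t" "?g u \<noteq> ?g (u - 1)"
      using change[of s t ?g] ts by auto
    have up: "f ` {..<u} = f ` {..u - 1}" using lessThan_pred[of u] u by simp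
    have "s0 \<le> u" using u unfolding s_def by simp
    then have "?o u = Some 0" using loeq[of u] u(3) up unfolding dec_def by simp
    moreover have "u > m" using u unfolding s_def by simp
    ultimately show "\<exists>n>m. n \<in> {s. ?o s = Some 0}" by blast
  qed
qed

lemma case_omegastar: fixes f :: "nat \<Rightarrow> nat" assumes "bij f"
  shows "infinite {s. dec omegastar_t (f ` {..s}) (f ` {..<s}) = Some 1}"
    and "j \<noteq> 1 \<Longrightarrow> finite {s. dec omegastar_t (f ` {..s}) (f ` {..<s}) = Some j}"
proof -
  let ?o = "\<lambda>s. dec omegastar_t (f ` {..s}) (f ` {..<s})"
  have sf: "surj f" using assms bij_is_surj by blast
  obtain s0 where s0: "\<And>s. s \<ge> s0 \<Longrightarrow> {0,2} \<subseteq> f ` {..<s}"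
    using exhaust[OF sf, of "{0,2}"] by auto
  have sub: "\<And>s. f ` {..<s} \<subseteq> f ` {..s}" by auto
  have hieq: "hi omegastar_t (Nn omegastar_t (f ` {..s})) = hi omegastar_t (Nn omegastar_t (f ` {..<s}))" if "s \<ge> s0" for s
  proof -
    have "0 \<in> f ` {..<s}" "2 \<in> f ` {..<s}" using s0[OF that] by auto
    moreover then have "0 \<in> f ` {..s}" "2 \<in> f ` {..s}" using sub[of s] by auto
    ultimately show ?thesis by (simp add: hiS)
  qed
  have f0: "finite {s. ?o s = Some 0}"
  proof (rule finite_subset)
    show "{s. ?o s = Some 0} \<subseteq> {..<s0}"
    proof
      fix s assume "s \<in> {s. ?o s = Some 0}"
      then have "hi omegastar_t (Nn omegastar_t (f ` {..s})) \<noteq> hi omegastar_t (Nn omegastar_t (f ` {..<s}))"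
        using dec_Some0 by simp
      then have "\<not> s0 \<le> s" using hieq by blast
      then show "s \<in> {..<s0}" by simp
    qed
  qed simp
  have fk: "finite {s. ?o s = Some (Suc (Suc k))}" for k
  proof -
    obtain s1 where s1: "\<And>s. s \<ge> s1 \<Longrightarrow> (\<lambda>i. 2*i) ` {..Suc (Suc k)} \<subseteq> f ` {..<s}"
      using exhaust[OF sf, of "(\<lambda>i. 2*i) ` {..Suc (Suc k)}"] by auto
    have "{s. ?o s = Some (Suc (Suc k))} \<subseteq> {..<s1}"
    proof
      fix s assume "s \<in> {s. ?o s = Some (Suc (Suc k))}"
      then have "card (Nn omegastar_t (f ` {..s})) = Suc (Suc k)" using dec_SomeSS by auto
      show "s \<in> {..<s1}"
      proof (rule ccontr)
        assume "s \<notin> {..<s1}"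
        then have "s1 \<le> s" by simp
        then have "(\<lambda>i. 2*i) ` {..Suc (Suc k)} \<subseteq> f ` {..s}" using s1 sub[of s] by blast
        then have "card (Nn omegastar_t (f ` {..s})) \<noteq> Suc (Suc k)"
          using card_big[of omegastar_t "f ` {..s}" k] by simp
        then show False using \<open>card (Nn omegastar_t (f ` {..s})) = Suc (Suc k)\<close> by simp
      qed
    qed
    then show ?thesis by (rule finite_subset) simp
  qed
  show "j \<noteq> 1 \<Longrightarrow> finite {s. ?o s = Some j}"
  proof -
    assume "j \<noteq> 1"
    then consider "j = 0" | k where "j = Suc (Suc k)" by (metis One_nat_def not0_implies_Suc)
    then show ?thesis using f0 fk by cases auto
  qed
  show "infinite {s. ?o s = Some 1}"
  proof (rule unb_inf)
    fix m
    define s where "s = max m s0"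
    let ?B = "f ` {..s}"
    define e where "e = 2 * (Max ?B + 1)"
    define t where "t = inv f e"
    have ft: "f t = e" unfolding t_def using sf by (simp add: surj_f_inv_f)
    have fB: "finite ?B" by simp
    have ltB: "\<forall>x\<in>?B. x < e"
    proof
      fix x assume "x \<in> ?B"
      then have "x \<le> Max ?B" using fB by (intro Max_ge) auto
      then show "x < e" unfolding e_def by simp
    qed
    have ts: "s < t"
    proof (rule ccontr)
      assume "\<not> s < t" then have "e \<in> ?B" using ft by auto
      then show False using ltB by blast
    qed
    have 02: "0 \<in> ?B" "2 \<in> ?B" using s0[of s] sub[of s] unfolding s_def by auto
    let ?g = "\<lambda>u. lo omegastar_t (Nn omegastar_t (f ` {..u}))"
    have "?g s \<noteq> ?g t"
    proof (rule loS_change[OF fB 02(1) 02(2) _ _ _ ltB])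
      show "f ` {..s} \<subseteq> f ` {..t}" using ts by (intro image_mono) auto
      show "e \<in> f ` {..t}" using ft by blast
      show "even e" unfolding e_def by simp
    qed
    then obtain u where u: "s < u" "u \<le> t" "?g u \<noteq> ?g (u - 1)"
      using change[of s t ?g] ts by auto
    have up: "f ` {..<u} = f ` {..u - 1}" using lessThan_pred[of u] u by simp
    have "s0 \<le> u" using u unfolding s_def by simp
    then have "?o u = Some 1" using hieq[of u] u(3) up unfolding dec_def by simp
    moreover have "u > m" using u unfolding s_def by simp
    ultimately show "\<exists>n>m. n \<in> {s. ?o s = Some 1}" by blast
  qed
qed


lemma NnL: assumes "2 \<le> k" "{..<k} \<subseteq> B" shows "Nn (Ln_t k) B = {..<k}"
proof
  show "Nn (Ln_t k) B \<subseteq> {..<k}" unfolding Nn_def Ln_t_def by auto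
  show "{..<k} \<subseteq> Nn (Ln_t k) B"
  proof
    fix a assume a: "a \<in> {..<k}"
    let ?b = "if a = 0 then 1 else 0::nat"
    have "?b < k" "?b \<noteq> a" using assms(1) by auto
    then show "a \<in> Nn (Ln_t k) B" unfolding Nn_def Ln_t_def using a assms(2)
      by (cases "a \<le> ?b") (auto intro!: bexI[of _ ?b])
  qed
qed

lemma case_L: fixes f :: "nat \<Rightarrow> nat" assumes "bij f" "2 \<le> k"
  shows "infinite {s. dec (Ln_t k) (f ` {..s}) (f ` {..<s}) = Some k}"
    and "j \<noteq> k \<Longrightarrow> finite {s. dec (Ln_t k) (f ` {..s}) (f ` {..<s}) = Some j}"
proof -
  let ?o = "\<lambda>s. dec (Ln_t k) (f ` {..s}) (f ` {..<s})"
  have sf: "surj f" using assms bij_is_surj by blast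
  obtain s0 where s0: "\<And>s. s \<ge> s0 \<Longrightarrow> {..<k} \<subseteq> f ` {..<s}"
    using exhaust[OF sf, of "{..<k}"] by auto
  have ok: "?o s = Some k" if "s \<ge> s0" for s
  proof -
    have "{..<k} \<subseteq> f ` {..s}" using s0[OF that] by auto
    then have "Nn (Ln_t k) (f ` {..s}) = {..<k}" "Nn (Ln_t k) (f ` {..<s}) = {..<k}"
      using NnL assms(2) s0[OF that] by auto
    then show ?thesis unfolding dec_def using assms(2) by simp
  qed
  show "infinite {s. ?o s = Some k}"
  proof (rule unb_inf)
    fix m show "\<exists>n>m. n \<in> {s. ?o s = Some k}"
      using ok[of "Suc (max m s0)"] by (intro exI[of _ "Suc (max m s0)"]) auto
  qed
  show "finite {s. ?o s = Some j}" if "j \<noteq> k"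
  proof (rule finite_subset)
    show "{s. ?o s = Some j} \<subseteq> {..<s0}"
    proof
      fix s assume "s \<in> {s. ?o s = Some j}"
      then show "s \<in> {..<s0}" using ok[of s] that by (cases "s0 \<le> s") auto
    qed
  qed simp
qed

lemma key: fixes f :: "nat \<Rightarrow> nat" assumes "bij f"
  shows "infinite {s. dec (Fstar i) (f ` {..s}) (f ` {..<s}) = Some i}
    \<and> (\<forall>j. j \<noteq> i \<longrightarrow> finite {s. dec (Fstar i) (f ` {..s}) (f ` {..<s}) = Some j})"
proof (cases i rule: Fstar.cases)
  case 1 then show ?thesis using case_omega[OF assms] by simp
next
  case 2 then show ?thesis using case_omegastar[OF assms] by simp
next
  case (3 k) then show ?thesis using case_L[OF assms, of "Suc (Suc k)"] by simp
qed

lemma learner_iso: assumes "iso S (Fstar i)"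
  shows "infinite {n. learner (restr S n) = Some i} \<and> (\<forall>j. j \<noteq> i \<longrightarrow> finite {n. learner (restr S n) = Some j})"
proof -
  obtain f where f: "bij f" "\<And>x y. S x y = Fstar i (f x) (f y)" using assms unfolding iso_def by blast
  have S: "S = (\<lambda>x y. Fstar i (f x) (f y))" using f(2) by (intro ext) simp
  have "\<And>n. learner (restr S n) = dec (Fstar i) (f ` {..n}) (f ` {..<n})"
    unfolding learner_restr S using dec_img[of f] f(1) bij_is_inj by blast
  then show ?thesis using key[OF f(1), of i] by simp
qed

theorem mainTheorem17:
  shows "PL_learnable Fstar"
  unfolding PL_learnable_def
proof (intro exI[of _ learner] ballI allI)
  fix S i assume "S \<in> LD Fstar"
  then obtain i0 where i0: "iso S (Fstar i0)" unfolding LD_def by blast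
  show "infinite {n. learner (restr S n) = Some i} \<longleftrightarrow> iso S (Fstar i)"
  proof
    assume "infinite {n. learner (restr S n) = Some i}"
    then have "i = i0" using learner_iso[OF i0] by blast
    then show "iso S (Fstar i)" using i0 by simp
  next
    assume "iso S (Fstar i)"
    then show "infinite {n. learner (restr S n) = Some i}" using learner_iso by blast
  qed
qed

end
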